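(* Let $H$ be a real Hilbert space, $r_0>0$ and $\mathcal{V}:(0,r_0]\rightrightarrows H$ a set-valued mapping with nonempty values. Assume that for each $r\in(0,r_0]$ there exist $\epsilon_r\in(0,r)$ and an absolutely continuous curve $\theta_r:(r-\epsilon_r,r]\to H$ such that $\theta_r(s)\in\mathcal{V}(s)$ for all $s\in(r-\epsilon_r,r]$. Then there exist a countable partition $\{I_n\}_{n\in\mathbb{N}}$ of $(0,r_0]$ into intervals with nonempty interior and a map $\theta:(0,r_0]\to H$ with $\theta(r)\in\mathcal{V}(r)$ for all $r\in(0,r_0]$ such that $\theta$ is absolutely continuous on each $I_n$. *)

theory Defs
  imports "HOL-Analysis.Analysis"
begin

definition abs_continuous_on :: "real set \<Rightarrow> (real \<Rightarrow> 'a::real_normed_vector) \<Rightarrow> bool" where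
  "abs_continuous_on I f \<longleftrightarrow>
    (\<forall>e>0. \<exists>d>0. \<forall>(n::nat) (a::nat \<Rightarrow> real) (b::nat \<Rightarrow> real).
       (\<forall>k<n. a k \<le> b k \<and> {a k..b k} \<subseteq> I) \<and>
       (\<forall>j<n. \<forall>k<n. j \<noteq> k \<longrightarrow> b j \<le> a k \<or> b k \<le> a j) \<and>
       (\<Sum>k<n. b k - a k) < d
       \<longrightarrow> (\<Sum>k<n. norm (f (b k) - f (a k))) < e)"

end

theory Submission
  imports Defs
begin

lemma ac_mono: "abs_continuous_on I f \<Longrightarrow> J \<subseteq> I \<Longrightarrow> abs_continuous_on J f"
  unfolding abs_continuous_on_def by (smt (verit) order_trans)

lemma ac_cong:
  assumes "abs_continuous_on I f" "\<And>x. x \<in> I \<Longrightarrow> g x = f x"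
  shows "abs_continuous_on I g"
  unfolding abs_continuous_on_def
proof (intro allI impI)
  fix e :: real assume "e > 0"
  then obtain d where d: "d > 0" and H: "\<forall>(n::nat) (a::nat \<Rightarrow> real) (b::nat \<Rightarrow> real).
       (\<forall>k<n. a k \<le> b k \<and> {a k..b k} \<subseteq> I) \<and>
       (\<forall>j<n. \<forall>k<n. j \<noteq> k \<longrightarrow> b j \<le> a k \<or> b k \<le> a j) \<and>
       (\<Sum>k<n. b k - a k) < d
       \<longrightarrow> (\<Sum>k<n. norm (f (b k) - f (a k))) < e"
    using assms(1) unfolding abs_continuous_on_def by blast
  show "\<exists>d>0. \<forall>(n::nat) (a::nat \<Rightarrow> real) (b::nat \<Rightarrow> real).
       (\<forall>k<n. a k \<le> b k \<and> {a k..b k} \<subseteq> I) \<and>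
       (\<forall>j<n. \<forall>k<n. j \<noteq> k \<longrightarrow> b j \<le> a k \<or> b k \<le> a j) \<and>
       (\<Sum>k<n. b k - a k) < d
       \<longrightarrow> (\<Sum>k<n. norm (g (b k) - g (a k))) < e"
  proof (intro exI[of _ d] conjI d allI impI)
    fix n :: nat and a b :: "nat \<Rightarrow> real"
    assume A: "(\<forall>k<n. a k \<le> b k \<and> {a k..b k} \<subseteq> I) \<and>
       (\<forall>j<n. \<forall>k<n. j \<noteq> k \<longrightarrow> b j \<le> a k \<or> b k \<le> a j) \<and>
       (\<Sum>k<n. b k - a k) < d"
    have "(\<Sum>k<n. norm (g (b k) - g (a k))) = (\<Sum>k<n. norm (f (b k) - f (a k)))"
    proof (rule sum.cong)
      fix k assume "k \<in> {..<n}"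
      then have "a k \<le> b k" "{a k..b k} \<subseteq> I" using A by auto
      then have "a k \<in> I" "b k \<in> I" by auto
      then show "norm (g (b k) - g (a k)) = norm (f (b k) - f (a k))" using assms(2) by simp
    qed simp
    also have "\<dots> < e" using H A by blast
    finally show "(\<Sum>k<n. norm (g (b k) - g (a k))) < e" .
  qed
qed

definition pgood :: "(real \<Rightarrow> real) \<Rightarrow> real \<Rightarrow> (real \<times> real) set \<Rightarrow> real \<Rightarrow> real \<Rightarrow> bool" where
  "pgood e r0 P t u \<longleftrightarrow> countable P \<and>
     (\<forall>p\<in>P. fst p < snd p \<and> (\<exists>r\<in>{0<..r0}. {fst p<..snd p} \<subseteq> {r - e r<..r})) \<and>
     (\<forall>p\<in>P. \<forall>q\<in>P. p \<noteq> q \<longrightarrow> {fst p<..snd p} \<inter> {fst q<..snd q} = {}) \<and>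
     (\<Union>p\<in>P. {fst p<..snd p}) = {t<..u}"

definition restr :: "real \<Rightarrow> real \<Rightarrow> (real \<times> real) set \<Rightarrow> (real \<times> real) set" where
  "restr c d P = {p \<in> (\<lambda>p. (max (fst p) c, min (snd p) d)) ` P. fst p < snd p}"

lemma pgood_restr:
  assumes "pgood e r0 P t u" "t \<le> c" "d \<le> u"
  shows "pgood e r0 (restr c d P) c d"
  unfolding pgood_def
proof (intro conjI)
  have P: "countable P" "\<forall>p\<in>P. fst p < snd p \<and> (\<exists>r\<in>{0<..r0}. {fst p<..snd p} \<subseteq> {r - e r<..r})"
     "\<forall>p\<in>P. \<forall>q\<in>P. p \<noteq> q \<longrightarrow> {fst p<..snd p} \<inter> {fst q<..snd q} = {}"
     "(\<Union>p\<in>P. {fst p<..snd p}) = {t<..u}" using assms(1) unfolding pgood_def by (blast)+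
  show "countable (restr c d P)" unfolding restr_def using P(1) by simp
  show "\<forall>p\<in>restr c d P. fst p < snd p \<and> (\<exists>r\<in>{0<..r0}. {fst p<..snd p} \<subseteq> {r - e r<..r})"
  proof
    fix p assume "p \<in> restr c d P"
    then obtain q where q: "q \<in> P" "p = (max (fst q) c, min (snd q) d)" "fst p < snd p"
      unfolding restr_def by auto
    then have "{fst p<..snd p} \<subseteq> {fst q<..snd q}" by auto
    then show "fst p < snd p \<and> (\<exists>r\<in>{0<..r0}. {fst p<..snd p} \<subseteq> {r - e r<..r})"
      using q P(2) by blast
  qed
  show "\<forall>p\<in>restr c d P. \<forall>q\<in>restr c d P. p \<noteq> q \<longrightarrow> {fst p<..snd p} \<inter> {fst q<..snd q} = {}"
  proof (intro ballI impI)
    fix p q assume "p \<in> restr c d P" "q \<in> restr c d P" "p \<noteq> q"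
    then obtain p' q' where "p' \<in> P" "p = (max (fst p') c, min (snd p') d)"
       "q' \<in> P" "q = (max (fst q') c, min (snd q') d)" "p' \<noteq> q'"
      unfolding restr_def by auto
    moreover have "{fst p<..snd p} \<subseteq> {fst p'<..snd p'}" "{fst q<..snd q} \<subseteq> {fst q'<..snd q'}"
      using calculation by auto
    ultimately show "{fst p<..snd p} \<inter> {fst q<..snd q} = {}" using P(3) by blast
  qed
  show "(\<Union>p\<in>restr c d P. {fst p<..snd p}) = {c<..d}"
  proof
    show "(\<Union>p\<in>restr c d P. {fst p<..snd p}) \<subseteq> {c<..d}" unfolding restr_def by auto
    show "{c<..d} \<subseteq> (\<Union>p\<in>restr c d P. {fst p<..snd p})"
    proof
      fix x assume x: "x \<in> {c<..d}"
      then have "x \<in> {t<..u}" using assms by auto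
      then obtain q where q: "q \<in> P" "x \<in> {fst q<..snd q}" using P(4) by blast
      let ?p = "(max (fst q) c, min (snd q) d)"
      have "?p \<in> restr c d P" unfolding restr_def using q x by auto
      moreover have "x \<in> {fst ?p<..snd ?p}" using q x by auto
      ultimately show "x \<in> (\<Union>p\<in>restr c d P. {fst p<..snd p})" by blast
    qed
  qed
qed

lemma pgood_empty: "pgood e r0 {} u u"
  unfolding pgood_def by auto

lemma ioc_sub_left: "{a<..b} \<subseteq> {t<..u} \<Longrightarrow> (a::real) < b \<Longrightarrow> t \<le> a"
proof (rule ccontr)
  assume "{a<..b} \<subseteq> {t<..u}" "a < b" "\<not> t \<le> a"
  then have "min t b \<in> {a<..b}" by auto
  then show False using \<open>{a<..b} \<subseteq> {t<..u}\<close> by fastforce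
qed

lemma pgood_add:
  assumes "pgood e r0 P t u" "0 < t" "t \<le> r0" "0 < e t" "t \<le> u"
  shows "pgood e r0 (insert (t - e t, t) P) (t - e t) u"
proof -
  have P: "countable P" "\<forall>p\<in>P. fst p < snd p \<and> (\<exists>r\<in>{0<..r0}. {fst p<..snd p} \<subseteq> {r - e r<..r})"
     "\<forall>p\<in>P. \<forall>q\<in>P. p \<noteq> q \<longrightarrow> {fst p<..snd p} \<inter> {fst q<..snd q} = {}"
     "(\<Union>p\<in>P. {fst p<..snd p}) = {t<..u}" using assms(1) unfolding pgood_def by (blast)+
  have tu: "t \<le> u" using assms(5) .
  show ?thesis unfolding pgood_def
  proof (intro conjI)
    show "countable (insert (t - e t, t) P)" using P(1) by simp
    show "\<forall>p\<in>insert (t - e t, t) P. fst p < snd p \<and> (\<exists>r\<in>{0<..r0}. {fst p<..snd p} \<subseteq> {r - e r<..r})"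
      using P(2) assms by auto
    have sub: "\<And>p. p \<in> P \<Longrightarrow> {fst p<..snd p} \<subseteq> {t<..u}" using P(4) by blast
    show "\<forall>p\<in>insert (t - e t, t) P. \<forall>q\<in>insert (t - e t, t) P. p \<noteq> q \<longrightarrow> {fst p<..snd p} \<inter> {fst q<..snd q} = {}"
    proof (intro ballI impI)
      fix p q assume pq: "p \<in> insert (t - e t, t) P" "q \<in> insert (t - e t, t) P" "p \<noteq> q"
      show "{fst p<..snd p} \<inter> {fst q<..snd q} = {}"
      proof (cases "p \<in> P \<and> q \<in> P")
        case True then show ?thesis using P(3) pq by blast
      next
        case False
        then consider "p = (t - e t, t)" "q \<in> P" | "q = (t - e t, t)" "p \<in> P" using pq by auto
        then show ?thesis
        proof cases
          case 1 then show ?thesis using sub[of q] ioc_sub_left[OF sub[of q]] P(2) by fastforce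
        next
          case 2 then show ?thesis using sub[of p] ioc_sub_left[OF sub[of p]] P(2) by fastforce
        qed
      qed
    qed
    show "(\<Union>p\<in>insert (t - e t, t) P. {fst p<..snd p}) = {t - e t<..u}"
      using P(4) tu assms by auto
  qed
qed

lemma pgood_union:
  assumes P: "\<And>n. pgood e r0 (P n) (g (Suc n)) (g n)" and dec: "\<And>n. g (Suc n) < g n"
    and lim: "g \<longlonglongrightarrow> s"
  shows "pgood e r0 (\<Union>n. P n) s (g 0)"
proof -
  have ds: "decseq g" using dec by (simp add: decseq_SucI less_imp_le)
  have sle: "s \<le> g n" for n using decseq_ge[OF ds lim] by simp
  have sub: "\<And>n p. p \<in> P n \<Longrightarrow> {fst p<..snd p} \<subseteq> {g (Suc n)<..g n}" using P unfolding pgood_def by blast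
  show ?thesis unfolding pgood_def
  proof (intro conjI)
    show "countable (\<Union>n. P n)" using P unfolding pgood_def by auto
    show "\<forall>p\<in>(\<Union>n. P n). fst p < snd p \<and> (\<exists>r\<in>{0<..r0}. {fst p<..snd p} \<subseteq> {r - e r<..r})"
      using P unfolding pgood_def by blast
    show "\<forall>p\<in>(\<Union>n. P n). \<forall>q\<in>(\<Union>n. P n). p \<noteq> q \<longrightarrow> {fst p<..snd p} \<inter> {fst q<..snd q} = {}"
    proof (intro ballI impI)
      fix p q assume "p \<in> (\<Union>n. P n)" "q \<in> (\<Union>n. P n)" "p \<noteq> q"
      then obtain n m where nm: "p \<in> P n" "q \<in> P m" by auto
      show "{fst p<..snd p} \<inter> {fst q<..snd q} = {}"
      proof (cases "n = m")
        case True then show ?thesis using P[of n] nm \<open>p \<noteq> q\<close> unfolding pgood_def by blast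
      next
        case False
        then consider "Suc n \<le> m" | "Suc m \<le> n" by linarith
        then show ?thesis
        proof cases
          case 1 then have "g m \<le> g (Suc n)" using ds by (simp add: decseq_def)
          then have "{g (Suc n)<..g n} \<inter> {g (Suc m)<..g m} = {}" by auto
          then show ?thesis using sub[OF nm(1)] sub[OF nm(2)] by blast
        next
          case 2 then have "g n \<le> g (Suc m)" using ds by (simp add: decseq_def)
          then have "{g (Suc n)<..g n} \<inter> {g (Suc m)<..g m} = {}" by auto
          then show ?thesis using sub[OF nm(1)] sub[OF nm(2)] by blast
        qed
      qed
    qed
    show "(\<Union>p\<in>(\<Union>n. P n). {fst p<..snd p}) = {s<..g 0}"
    proof
      show "(\<Union>p\<in>(\<Union>n. P n). {fst p<..snd p}) \<subseteq> {s<..g 0}"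
      proof
        fix x assume "x \<in> (\<Union>p\<in>(\<Union>n. P n). {fst p<..snd p})"
        then obtain n p where "p \<in> P n" "x \<in> {fst p<..snd p}" by auto
        then have "x \<in> {g (Suc n)<..g n}" using sub by blast
        moreover have "g n \<le> g 0" using ds by (simp add: decseq_def)
        ultimately show "x \<in> {s<..g 0}" using sle[of "Suc n"] by auto
      qed
      show "{s<..g 0} \<subseteq> (\<Union>p\<in>(\<Union>n. P n). {fst p<..snd p})"
      proof
        fix x assume x: "x \<in> {s<..g 0}"
        have "\<exists>n. g n < x"
        proof -
          have "eventually (\<lambda>n. g n < x) sequentially"
            using lim x by (simp add: order_tendstoD(2))
          then show ?thesis by (meson eventually_sequentially order_refl)
        qed
        define N where "N = (LEAST n. g n < x)"
        have N: "g N < x" unfolding N_def using \<open>\<exists>n. g n < x\<close> by (meson LeastI_ex)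
        have "N \<noteq> 0"
        proof
          assume "N = 0" with N x show False by simp
        qed
        then obtain M where M: "N = Suc M" using not0_implies_Suc by blast
        have "\<not> g M < x" using M N_def not_less_Least by (metis lessI)
        then have "x \<in> {g (Suc M)<..g M}" using N M by auto
        then obtain p where "p \<in> P M" "x \<in> {fst p<..snd p}" using P[of M] unfolding pgood_def by blast
        then show "x \<in> (\<Union>p\<in>(\<Union>n. P n). {fst p<..snd p})" by blast
      qed
    qed
  qed
qed

theorem proposition5p7:
  fixes V :: "real \<Rightarrow> 'a::{real_inner, complete_space} set"
    and r0 :: real
  assumes r0_pos: "r0 > 0"
    and nonempty: "\<And>r. r \<in> {0<..r0} \<Longrightarrow> V r \<noteq> {}"
    and local_sel: "\<And>r. r \<in> {0<..r0} \<Longrightarrow>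
        \<exists>\<epsilon> \<theta>. 0 < \<epsilon> \<and> \<epsilon> < r \<and> abs_continuous_on {r - \<epsilon><..r} \<theta> \<and>
              (\<forall>s\<in>{r - \<epsilon><..r}. \<theta> s \<in> V s)"
  shows "\<exists>(I :: nat \<Rightarrow> real set) (\<theta> :: real \<Rightarrow> 'a).
           disjoint_family I \<and> (\<Union>n. I n) = {0<..r0} \<and>
           (\<forall>n. is_interval (I n) \<and> interior (I n) \<noteq> {}) \<and>
           (\<forall>r\<in>{0<..r0}. \<theta> r \<in> V r) \<and>
           (\<forall>n. abs_continuous_on (I n) \<theta>)"
proof -
  have "\<forall>r\<in>{0<..r0}. \<exists>p. 0 < fst p \<and> fst p < r \<and> abs_continuous_on {r - fst p<..r} (snd p) \<and>
              (\<forall>s\<in>{r - fst p<..r}. snd p s \<in> V s)"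
    using local_sel by fastforce
  then obtain F where F: "\<forall>r\<in>{0<..r0}. 0 < fst (F r) \<and> fst (F r) < r \<and> abs_continuous_on {r - fst (F r)<..r} (snd (F r)) \<and>
              (\<forall>s\<in>{r - fst (F r)<..r}. snd (F r) s \<in> V s)"
    by (rule bchoice[elim_format]) blast
  define e where "e r = fst (F r)" for r
  define th where "th r = snd (F r)" for r
  have H: "\<And>r. r \<in> {0<..r0} \<Longrightarrow> 0 < e r \<and> e r < r \<and> abs_continuous_on {r - e r<..r} (th r) \<and>
              (\<forall>s\<in>{r - e r<..r}. th r s \<in> V s)"
    using F unfolding e_def th_def by blast
  define T where "T = {t. 0 \<le> t \<and> t \<le> r0 \<and> (\<exists>P. pgood e r0 P t r0)}"
  have r0T: "r0 \<in> T" unfolding T_def using pgood_empty r0_pos by auto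
  have bdd: "bdd_below T" unfolding T_def bdd_below_def by auto
  define s where "s = Inf T"
  have s0: "0 \<le> s" unfolding s_def using r0T by (intro cInf_greatest) (auto simp: T_def)
  have sr0: "s \<le> r0" unfolding s_def using r0T bdd by (rule cInf_lower)
  have ex_lt: "\<And>y. s < y \<Longrightarrow> \<exists>t\<in>T. t < y" unfolding s_def using r0T bdd
    by (subst cInf_less_iff[symmetric]) auto
  have sT: "s \<in> T"
  proof (cases "s = r0")
    case True then show ?thesis using r0T by simp
  next
    case False
    then have slt: "s < r0" using sr0 by simp
    define g where "g n = s + (r0 - s) / real (Suc n)" for n
    have gS: "s < g n" for n unfolding g_def using slt by simp
    have "\<forall>n. \<exists>P. pgood e r0 P (g (Suc n)) (g n)"
    proof
      fix n
      obtain t where t: "t \<in> T" "t < g (Suc n)" using ex_lt[OF gS[of "Suc n"]] by blast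
      then obtain P where P: "pgood e r0 P t r0" unfolding T_def by blast
      have "g n \<le> r0" unfolding g_def using slt by (simp add: field_simps mult_right_mono)
      then show "\<exists>P. pgood e r0 P (g (Suc n)) (g n)"
        using pgood_restr[OF P, of "g (Suc n)" "g n"] t by auto
    qed
    then obtain PP where PP: "\<And>n. pgood e r0 (PP n) (g (Suc n)) (g n)" by metis
    have dec: "g (Suc n) < g n" for n
      unfolding g_def using slt by (simp add: frac_less2)
    have lim: "g \<longlonglongrightarrow> s"
    proof -
      have "(\<lambda>n. (r0 - s) / real (Suc n)) \<longlonglongrightarrow> 0"
        using LIMSEQ_Suc[OF lim_const_over_n[of "r0 - s"]] by simp
      then have "(\<lambda>n. s + (r0 - s) / real (Suc n)) \<longlonglongrightarrow> s + 0" by (intro tendsto_add) auto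
      then show ?thesis unfolding g_def by simp
    qed
    have "pgood e r0 (\<Union>n. PP n) s (g 0)" by (rule pgood_union[OF PP dec lim])
    moreover have "g 0 = r0" unfolding g_def by simp
    ultimately show ?thesis unfolding T_def using s0 sr0 by auto
  qed
  have s_eq: "s = 0"
  proof (rule ccontr)
    assume "s \<noteq> 0"
    then have sp: "0 < s" using s0 by simp
    obtain P where P: "pgood e r0 P s r0" using sT unfolding T_def by blast
    have Hs: "0 < e s" "e s < s" using H[of s] sp sr0 by auto
    have "pgood e r0 (insert (s - e s, s) P) (s - e s) r0" by (rule pgood_add[OF P sp sr0 Hs(1) sr0])
    then have "s - e s \<in> T" unfolding T_def using Hs sr0 by auto
    then have "s \<le> s - e s" unfolding s_def using bdd by (rule cInf_lower)
    then show False using Hs by simp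
  qed
  obtain P where P: "pgood e r0 P 0 r0" using sT s_eq unfolding T_def by blast
  define g where "g n = r0 / real (Suc n)" for n
  define Q where "Q n = restr (g (Suc n)) (g n) P" for n
  have gpos: "0 < g n" for n unfolding g_def using r0_pos by simp
  have dec: "g (Suc n) < g n" for n unfolding g_def using r0_pos by (simp add: frac_less2)
  have gle: "g n \<le> r0" for n unfolding g_def using r0_pos by (simp add: field_simps mult_right_mono)
  have QP: "pgood e r0 (Q n) (g (Suc n)) (g n)" for n
    unfolding Q_def using gpos[of "Suc n"] gle[of n] by (intro pgood_restr[OF P]) auto
  have lim: "g \<longlonglongrightarrow> 0"
    unfolding g_def using LIMSEQ_Suc[OF lim_const_over_n[of r0]] by simp
  define QQ where "QQ = (\<Union>n. Q n)"
  have PQ: "pgood e r0 QQ 0 r0"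
    using pgood_union[OF QP dec lim] unfolding QQ_def g_def by simp
  have ex: "\<exists>p. p \<in> Q n" for n
  proof -
    have "g n \<in> {g (Suc n)<..g n}" using dec[of n] by simp
    then show ?thesis using QP[of n] unfolding pgood_def by blast
  qed
  define pn where "pn n = (SOME p. p \<in> Q n)" for n
  have pnQ: "pn n \<in> Q n" for n unfolding pn_def using ex[of n] by (rule someI_ex)
  have pnr: "snd (pn n) \<in> {g (Suc n)<..g n}" for n
  proof -
    have "fst (pn n) < snd (pn n)" "{fst (pn n)<..snd (pn n)} \<subseteq> {g (Suc n)<..g n}"
      using QP[of n] pnQ[of n] unfolding pgood_def by blast+
    then show ?thesis by auto
  qed
  have gmono: "m \<le> n \<Longrightarrow> g n \<le> g m" for m n
    unfolding g_def using r0_pos by (simp add: frac_le)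
  have "inj pn"
  proof (rule injI)
    fix m n assume eq: "pn m = pn n"
    show "m = n"
    proof (rule ccontr)
      assume "m \<noteq> n"
      then consider "Suc m \<le> n" | "Suc n \<le> m" by linarith
      then show False
      proof cases
        case 1 then have "g n \<le> g (Suc m)" by (rule gmono)
        then show False using pnr[of m] pnr[of n] eq by auto
      next
        case 2 then have "g m \<le> g (Suc n)" by (rule gmono)
        then show False using pnr[of m] pnr[of n] eq by auto
      qed
    qed
  qed
  then have "infinite (range pn)" by (rule range_inj_infinite)
  moreover have "range pn \<subseteq> QQ" unfolding QQ_def using pnQ by blast
  ultimately have infQ: "infinite QQ" using infinite_super by blast
  have cQ: "countable QQ" using PQ unfolding pgood_def by blast
  obtain f :: "nat \<Rightarrow> real \<times> real" where f: "bij_betw f UNIV QQ" using countable_infiniteE'[OF cQ infQ] by blast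
  have fQ: "f n \<in> QQ" for n using f bij_betwE by blast
  have finj: "f m = f n \<Longrightarrow> m = n" for m n using f by (auto simp: bij_betw_def inj_def)
  have frange: "range f = QQ" using f by (simp add: bij_betw_def)
  have Q1: "\<forall>p\<in>QQ. fst p < snd p \<and> (\<exists>r\<in>{0<..r0}. {fst p<..snd p} \<subseteq> {r - e r<..r})"
   and Q2: "\<forall>p\<in>QQ. \<forall>q\<in>QQ. p \<noteq> q \<longrightarrow> {fst p<..snd p} \<inter> {fst q<..snd q} = {}"
   and Q3: "(\<Union>p\<in>QQ. {fst p<..snd p}) = {0<..r0}" using PQ unfolding pgood_def by blast+
  obtain R where R: "\<forall>p\<in>QQ. R p \<in> {0<..r0} \<and> {fst p<..snd p} \<subseteq> {R p - e (R p)<..R p}"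
    using Q1 by (metis (no_types, lifting))
  define I where "I n = {fst (f n)<..snd (f n)}" for n
  have disj: "m \<noteq> n \<Longrightarrow> I m \<inter> I n = {}" for m n
    unfolding I_def using Q2 fQ finj by blast
  define \<theta> where "\<theta> x = th (R (f (SOME n. x \<in> I n))) x" for x
  have th_eq: "x \<in> I n \<Longrightarrow> \<theta> x = th (R (f n)) x" for x n
  proof -
    assume x: "x \<in> I n"
    have "x \<in> I (SOME n. x \<in> I n)" using x by (rule someI)
    then have "(SOME n. x \<in> I n) = n" using disj x by blast
    then show ?thesis unfolding \<theta>_def by simp
  qed
  have Rn: "R (f n) \<in> {0<..r0}" "I n \<subseteq> {R (f n) - e (R (f n))<..R (f n)}" for n
    using R fQ unfolding I_def by blast+
  have Un: "(\<Union>n. I n) = {0<..r0}"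
  proof -
    have "(\<Union>n. I n) = (\<Union>p\<in>range f. {fst p<..snd p})" unfolding I_def by auto
    then show ?thesis using Q3 frange by simp
  qed
  show ?thesis
  proof (intro exI[of _ I] exI[of _ \<theta>] conjI allI ballI)
    show "disjoint_family I" unfolding disjoint_family_on_def using disj by blast
    show "(\<Union>n. I n) = {0<..r0}" by (rule Un)
    fix n
    show "is_interval (I n)" unfolding I_def by (rule is_interval_oc)
    show "interior (I n) \<noteq> {}" unfolding I_def interior_lessThanAtMost using Q1 fQ[of n] by auto
    show "abs_continuous_on (I n) \<theta>"
    proof (rule ac_cong)
      show "abs_continuous_on (I n) (th (R (f n)))"
        using H[OF Rn(1)[of n]] Rn(2)[of n] ac_mono by blast
      show "\<And>x. x \<in> I n \<Longrightarrow> \<theta> x = th (R (f n)) x" by (rule th_eq)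
    qed
  next
    fix r assume r: "r \<in> {0<..r0}"
    then obtain n where n: "r \<in> I n" using Un by blast
    then show "\<theta> r \<in> V r" using th_eq[OF n] H[OF Rn(1)[of n]] Rn(2)[of n] by auto
  qed
qed
end
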